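(* Let $A=(a_{ij})\in\mathbb{R}^{n\times n}$ be symmetric positive definite, $b\in\mathbb{R}^n$, and let $x\in\mathbb{R}^n$ be a current approximation with residual $r=b-Ax=(r_1,\dots,r_n)^T$, assumed nonzero. Let $1\le m\le n$ and let $\mathcal{J}=\{i_1,\dots,i_m\}\subseteq\{1,\dots,n\}$ be a set of $m$ distinct indices consisting of the indices of $m$ components of $r$ with largest absolute value. Let $E=[e_{i_1},\dots,e_{i_m}]\in\mathbb{R}^{n\times m}$, where $e_j$ denotes the $j$-th column of the $n\times n$ identity matrix, set $y=(E^TAE)^{-1}E^Tr$ and $x_{new}=x+Ey$. Let $d=A^{-1}b-x$ and $d_{new}=A^{-1}b-x_{new}$. Then $$\|d\|_A^2-\|d_{new}\|_A^2\ \ge\ \frac{\sum_{k\in\mathcal{J}} r_k^2}{\sum_{k\in\mathcal{J}} a_{kk}},$$ and $$\|d_{new}\|_A\ \le\ \left(1-\frac{\lambda_{min}(A)}{\sum_{k\in\mathcal{J}} a_{kk}}\cdot\frac{\sum_{k\in\mathcal{J}} r_k^2}{\sum_{k=1}^{n} r_k^2}\right)^{1/2}\|d\|_A .$$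
   Context: For a vector $z$, $\|z\|_A=(Az,z)^{1/2}$ denotes the $A$-norm. $\lambda_{min}(A)$ denotes the smallest eigenvalue of $A$. The update $x_{new}=x+Ey$ is one step of the projection method with search and constraint space $\mathrm{span}\{e_{i_1},\dots,e_{i_m}\}$ (Petrov–Galerkin condition $r-AEy\perp \mathrm{span}\{e_{i_1},\dots,e_{i_m}\}$). *)

theory Defs
  imports "HOL-Analysis.Analysis"
begin

definition A_norm :: "real^'n^'n \<Rightarrow> real^'n \<Rightarrow> real" where
  "A_norm A z = sqrt (z \<bullet> (A *v z))"

definition sym_pos_def :: "real^'n^'n \<Rightarrow> bool" where
  "sym_pos_def A \<longleftrightarrow> transpose A = A \<and> (\<forall>v. v \<noteq> 0 \<longrightarrow> v \<bullet> (A *v v) > 0)"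

definition is_eigenvalue :: "real^'n^'n \<Rightarrow> real \<Rightarrow> bool" where
  "is_eigenvalue A l \<longleftrightarrow> (\<exists>v. v \<noteq> 0 \<and> A *v v = l *\<^sub>R v)"

definition lambda_min :: "real^'n^'n \<Rightarrow> real" where
  "lambda_min A = Inf {l. is_eigenvalue A l}"

text \<open>Matrix E = [e_{i_1},...,e_{i_m}] with columns indexed by the type 'm via idx.\<close>
definition sel_matrix :: "('m \<Rightarrow> 'n) \<Rightarrow> real^'m^'n" where
  "sel_matrix idx = (\<chi> i j. if i = idx j then 1 else 0)"

end

theory Submission
  imports Defs
begin

lemma inv_props:
  fixes A :: "real^'n^'n"
  assumes "invertible A"
  shows "A ** matrix_inv A = mat 1" "matrix_inv A ** A = mat 1"
  using someI_ex[OF assms[unfolded invertible_def]] unfolding matrix_inv_def by auto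

lemma transp_dot:
  fixes E :: "real^'m^'n"
  shows "(E *v y) \<bullet> z = y \<bullet> (transpose E *v z)"
  by (metis dot_lmul_matrix inner_commute transpose_matrix_vector)

lemma sym_dot:
  fixes A :: "real^'n^'n"
  assumes "transpose A = A"
  shows "u \<bullet> (A *v w) = w \<bullet> (A *v u)"
  by (metis assms inner_commute transp_dot)

lemma pd_invertible:
  fixes A :: "real^'n^'n"
  assumes "\<forall>v. v \<noteq> 0 \<longrightarrow> v \<bullet> (A *v v) > 0"
  shows "invertible A"
proof -
  have "\<forall>x. A *v x = 0 \<longrightarrow> x = 0"
    using assms by (metis inner_zero_right less_irrefl)
  then show ?thesis
    using invertible_left_inverse matrix_left_invertible_ker by blast
qed

lemma sel_comp:
  fixes idx :: "'m::finite \<Rightarrow> 'n::finite"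
  assumes "inj idx"
  shows "(sel_matrix idx *v v) $ i = (if i \<in> range idx then v $ (inv idx i) else 0)"
proof -
  have "(sel_matrix idx *v v) $ i = (\<Sum>j\<in>UNIV. (if i = idx j then 1 else 0) * v $ j)"
    by (simp add: sel_matrix_def matrix_vector_mult_def)
  also have "\<dots> = (\<Sum>j\<in>UNIV. if j = inv idx i \<and> i \<in> range idx then v $ j else 0)"
    apply (rule sum.cong, simp)
    using assms by (auto simp: inv_f_f)
  also have "\<dots> = (if i \<in> range idx then v $ (inv idx i) else 0)"
    by (cases "i \<in> range idx") auto
  finally show ?thesis .
qed

lemma selT_comp:
  fixes idx :: "'m::finite \<Rightarrow> 'n::finite"
  shows "(transpose (sel_matrix idx) *v r) $ j = r $ (idx j)"
proof -
  have "(transpose (sel_matrix idx) *v r) $ j = (\<Sum>i\<in>UNIV. (if i = idx j then 1 else 0) * r $ i)"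
    by (simp add: sel_matrix_def matrix_vector_mult_def transpose_def)
  also have "\<dots> = (\<Sum>i\<in>UNIV. if i = idx j then r $ i else 0)"
    by (rule sum.cong) auto
  also have "\<dots> = r $ (idx j)"
    by simp
  finally show ?thesis .
qed

lemma axis_form:
  fixes A :: "real^'n^'n"
  shows "axis i 1 \<bullet> (A *v axis j 1) = A $ i $ j"
proof -
  have "(A *v axis j 1) $ i = (\<Sum>k\<in>UNIV. A$i$k * (if k = j then 1 else 0))"
    by (simp add: matrix_vector_mult_def axis_def)
  also have "\<dots> = (\<Sum>k\<in>UNIV. if k = j then A$i$k else 0)"
    by (rule sum.cong) auto
  finally show ?thesis by (simp add: inner_axis')
qed

lemma pair_ineq:
  fixes A :: "real^'n^'n"
  assumes sym: "transpose A = A" and psd: "\<forall>v. v \<bullet> (A *v v) \<ge> 0"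
  shows "2*a*b*A$i$j \<le> a\<^sup>2 * A$j$j + b\<^sup>2 * A$i$i"
proof (cases "i = j")
  case True
  have "A$i$i \<ge> 0" using psd[rule_format, of "axis i 1"] axis_form[of i A i] by simp
  moreover have "2*a*b \<le> a\<^sup>2 + b\<^sup>2" by (simp add: sum_squares_bound)
  ultimately show ?thesis using True
    by (metis distrib_right mult_right_mono)
next
  case False
  have sy: "A$j$i = A$i$j" using sym by (metis transpose_def vec_lambda_beta)
  define v where "v = b *\<^sub>R axis i 1 - a *\<^sub>R axis j (1::real)"
  have "v \<bullet> (A *v v) = b*b*A$i$i - b*a*A$i$j - a*b*A$j$i + a*a*A$j$j"
    unfolding v_def
    by (simp add: matrix_vector_mult_diff_distrib matrix_vector_mult_scaleR inner_diff_left
        inner_diff_right axis_form algebra_simps)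
  then show ?thesis using psd[rule_format, of v] sy by (simp add: power2_eq_square algebra_simps)
qed

lemma quad_bound:
  fixes A :: "real^'n^'n"
  assumes sym: "transpose A = A" and psd: "\<forall>v. v \<bullet> (A *v v) \<ge> 0"
    and supp: "\<forall>k. k \<notin> J \<longrightarrow> u $ k = 0"
  shows "u \<bullet> (A *v u) \<le> (\<Sum>k\<in>UNIV. (u$k)\<^sup>2) * (\<Sum>k\<in>J. A$k$k)"
proof -
  define w where "w k = (if k \<in> J then A$k$k else 0)" for k
  have diag: "A$k$k \<ge> 0" for k using psd[rule_format, of "axis k 1"] axis_form[of k A k] by simp
  have w0: "w k \<ge> 0" for k using diag by (simp add: w_def)
  have Q: "u \<bullet> (A *v u) = (\<Sum>i\<in>UNIV. \<Sum>j\<in>UNIV. u$i * A$i$j * u$j)"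
    by (simp add: inner_vec_def matrix_vector_mult_def sum_distrib_left mult.assoc)
  have pt: "2 * (u$i * A$i$j * u$j) \<le> (u$i)\<^sup>2 * w j + (u$j)\<^sup>2 * w i" for i j
  proof (cases "i \<in> J \<and> j \<in> J")
    case True
    then show ?thesis using pair_ineq[OF sym psd, of "u$i" "u$j" i j]
      by (simp add: w_def algebra_simps)
  next
    case False
    then have "u$i * u$j = 0" using supp by auto
    then have z: "u$i * A$i$j * u$j = 0" by (metis mult.commute mult_zero_left mult.assoc)
    have "0 \<le> (u$i)\<^sup>2 * w j + (u$j)\<^sup>2 * w i" using w0
      by (intro add_nonneg_nonneg mult_nonneg_nonneg) auto
    then show ?thesis using z by linarith
  qed
  have "2 * (u \<bullet> (A *v u)) \<le> (\<Sum>i\<in>UNIV. \<Sum>j\<in>UNIV. (u$i)\<^sup>2 * w j + (u$j)\<^sup>2 * w i)"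
    unfolding Q sum_distrib_left by (intro sum_mono pt)
  also have "\<dots> = (\<Sum>i\<in>UNIV. \<Sum>j\<in>UNIV. (u$i)\<^sup>2 * w j) + (\<Sum>i\<in>UNIV. \<Sum>j\<in>UNIV. w i * (u$j)\<^sup>2)"
    by (simp add: sum.distrib mult.commute)
  also have "(\<Sum>i\<in>UNIV. \<Sum>j\<in>UNIV. (u$i)\<^sup>2 * w j) = (\<Sum>k\<in>UNIV. (u$k)\<^sup>2) * (\<Sum>k\<in>UNIV. w k)"
    by (simp add: sum_product)
  also have "(\<Sum>i\<in>UNIV. \<Sum>j\<in>UNIV. w i * (u$j)\<^sup>2) = (\<Sum>k\<in>UNIV. w k) * (\<Sum>k\<in>UNIV. (u$k)\<^sup>2)"
    by (simp add: sum_product)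
  also have "(\<Sum>k\<in>UNIV. w k) = (\<Sum>k\<in>J. A$k$k)"
    unfolding w_def by (simp add: sum.If_cases)
  finally show ?thesis by (simp add: mult.commute)
qed

lemma zero_deriv:
  fixes G c :: real
  assumes "\<forall>t. 2*t*G + t\<^sup>2*c \<ge> 0" "c \<ge> 0" "G \<ge> 0"
  shows "G = 0"
proof (rule ccontr)
  assume "G \<noteq> 0"
  then have Gp: "G > 0" using assms by simp
  define t where "t = - G / (c+1)"
  have h: "2*t*G + t\<^sup>2*c \<ge> 0" using assms(1) by blast
  have cp: "c + 1 > 0" using assms by simp
  have tn: "t < 0" using Gp cp unfolding t_def by simp
  have "t * (2*G + t*c) \<ge> 0" using h by (simp add: power2_eq_square algebra_simps)
  then have a: "2*G + t*c \<le> 0" using tn by (simp add: mult_le_0_iff zero_le_mult_iff)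
  have "c / (c+1) \<le> 1" using cp by simp
  then have "G * (c/(c+1)) \<le> G" using Gp by (metis mult.right_neutral mult_left_mono less_imp_le)
  moreover have "t*c = - (G * (c/(c+1)))" unfolding t_def by simp
  ultimately show False using a Gp by linarith
qed

lemma rayleigh_min:
  fixes A :: "real^'n^'n"
  assumes spd: "sym_pos_def A"
  shows "\<exists>\<mu> v. v \<noteq> 0 \<and> A *v v = \<mu> *\<^sub>R v \<and> \<mu> > 0 \<and> (\<forall>w. w \<bullet> (A *v w) \<ge> \<mu> * (w \<bullet> w))"
proof -
  have sym: "transpose A = A" and pd: "\<forall>v. v \<noteq> 0 \<longrightarrow> v \<bullet> (A *v v) > 0"
    using spd[unfolded sym_pos_def_def] by (rule conjunct1, rule conjunct2)
  define f where "f w = w \<bullet> (A *v w)" for w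
  have "continuous_on (sphere 0 1) f" unfolding f_def by (intro continuous_intros)
  then obtain v where v: "v \<in> sphere 0 1" and vmin: "\<forall>y\<in>sphere 0 1. f v \<le> f y"
    using continuous_attains_inf[of "sphere (0::real^'n) 1" f] compact_sphere by auto
  define \<mu> where "\<mu> = f v"
  have nv: "norm v = 1" using v by simp
  then have v0: "v \<noteq> 0" by auto
  have vv: "v \<bullet> v = 1" using nv by (simp add: dot_square_norm)
  have mup: "\<mu> > 0" using pd v0 unfolding \<mu>_def f_def by auto
  have lb: "f w \<ge> \<mu> * (w \<bullet> w)" for w
  proof (cases "w = 0")
    case True then show ?thesis by (simp add: f_def)
  next
    case False
    define c where "c = norm w"
    have cp: "c > 0" using False by (simp add: c_def)
    define w' where "w' = (1/c) *\<^sub>R w"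
    have "w' \<in> sphere 0 1" using cp by (simp add: w'_def c_def)
    then have "\<mu> \<le> f w'" using vmin by (simp add: \<mu>_def)
    moreover have "f w' = f w / c\<^sup>2"
      by (simp add: f_def w'_def matrix_vector_mult_scaleR power2_eq_square)
    moreover have "w \<bullet> w = c\<^sup>2" by (simp add: c_def dot_square_norm)
    ultimately show ?thesis using cp by (simp add: field_simps)
  qed
  define g where "g = A *v v - \<mu> *\<^sub>R v"
  define q where "q w = f w - \<mu> * (w \<bullet> w)" for w
  have q0: "q w \<ge> 0" for w using lb[of w] by (simp add: q_def)
  have qv: "q v = 0" by (simp add: q_def \<mu>_def vv)
  have symg: "v \<bullet> (A *v g) = g \<bullet> (A *v v)" using sym_dot[OF sym] by blast
  have gg: "g \<bullet> g = g \<bullet> (A *v v) - \<mu> * (g \<bullet> v)" by (simp add: g_def inner_diff_right)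
  have expand: "q (v + t *\<^sub>R g) = 2*t*(g \<bullet> g) + t\<^sup>2 * q g" for t
  proof -
    have "q (v + t *\<^sub>R g) = q v + t * (v \<bullet> (A *v g)) + t * (g \<bullet> (A *v v)) - 2 * t * \<mu> * (g \<bullet> v) + t\<^sup>2 * q g"
      by (simp add: q_def f_def matrix_vector_right_distrib matrix_vector_mult_scaleR
          inner_add_left inner_add_right inner_commute[of v g] power2_eq_square algebra_simps)
    then show ?thesis using qv symg unfolding gg by (simp add: algebra_simps)
  qed
  have "g \<bullet> g = 0"
    using zero_deriv[of "g \<bullet> g" "q g"] expand q0 by (metis inner_ge_zero)
  then have "g = 0" by simp
  then have "A *v v = \<mu> *\<^sub>R v" by (simp add: g_def)
  then show ?thesis using v0 mup lb unfolding f_def by blast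
qed

lemma lambda_min_le:
  fixes A :: "real^'n^'n"
  assumes spd: "sym_pos_def A" and ev: "is_eigenvalue A \<mu>"
  shows "lambda_min A \<le> \<mu>"
proof -
  have pd: "\<forall>v. v \<noteq> 0 \<longrightarrow> v \<bullet> (A *v v) > 0"
    using spd[unfolded sym_pos_def_def] by (rule conjunct2)
  have nn: "l \<ge> 0" if evl: "is_eigenvalue A l" for l
  proof -
    obtain v where v: "v \<noteq> 0" "A *v v = l *\<^sub>R v" using evl[unfolded is_eigenvalue_def] by blast
    have "v \<bullet> (A *v v) > 0" using pd v(1) by blast
    then have p: "l * (v \<bullet> v) > 0" using v(2) by (simp only: inner_scaleR_right)
    have q: "v \<bullet> v > 0" using v(1) by simp
    show ?thesis
    proof (rule ccontr)
      assume "\<not> l \<ge> 0"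
      then have "l < 0" by simp
      then have "l * (v \<bullet> v) < 0" using q by (rule mult_neg_pos)
      then show False using p by simp
    qed
  qed
  have bb: "bdd_below {l. is_eigenvalue A l}"
  proof (rule bdd_belowI)
    fix l assume "l \<in> {l. is_eigenvalue A l}"
    then show "0 \<le> l" using nn by blast
  qed
  have "Inf {l. is_eigenvalue A l} \<le> \<mu>"
    by (rule cInf_lower) (use ev bb in auto)
  then show ?thesis unfolding lambda_min_def .
qed

theorem theorem1:
  fixes A :: "real^'n^'n" and b x :: "real^'n" and idx :: "'m::finite \<Rightarrow> 'n"
  assumes spd: "sym_pos_def A"
    and r_nz: "b - A *v x \<noteq> 0"
    and inj: "inj idx"
    and largest: "\<forall>i\<in>range idx. \<forall>j. j \<notin> range idx \<longrightarrow>
                    \<bar>(b - A *v x) $ j\<bar> \<le> \<bar>(b - A *v x) $ i\<bar>"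
  shows "let r = b - A *v x; E = sel_matrix idx; J = range idx;
             y = matrix_inv (transpose E ** A ** E) *v (transpose E *v r);
             x_new = x + E *v y;
             d = matrix_inv A *v b - x;
             d_new = matrix_inv A *v b - x_new
         in (A_norm A d)\<^sup>2 - (A_norm A d_new)\<^sup>2 \<ge>
              (\<Sum>k\<in>J. (r $ k)\<^sup>2) / (\<Sum>k\<in>J. A $ k $ k)
          \<and> A_norm A d_new \<le>
              sqrt (1 - lambda_min A / (\<Sum>k\<in>J. A $ k $ k) *
                        ((\<Sum>k\<in>J. (r $ k)\<^sup>2) / (\<Sum>k\<in>UNIV. (r $ k)\<^sup>2))) * A_norm A d"
proof -
  have sym: "transpose A = A" and pd: "\<forall>v. v \<noteq> 0 \<longrightarrow> v \<bullet> (A *v v) > 0"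
    using spd[unfolded sym_pos_def_def] by (rule conjunct1, rule conjunct2)
  have psd: "\<forall>v. v \<bullet> (A *v v) \<ge> 0"
    using pd by (metis inner_zero_left less_imp_le order_refl)
  define r where "r = b - A *v x"
  define E where "E = sel_matrix idx"
  define J where "J = range idx"
  define M where "M = transpose E ** A ** E"
  define s where "s = transpose E *v r"
  define y where "y = matrix_inv M *v s"
  define d where "d = matrix_inv A *v b - x"
  define dn where "dn = matrix_inv A *v b - (x + E *v y)"
  define S where "S = (\<Sum>k\<in>J. (r $ k)\<^sup>2)"
  define T where "T = (\<Sum>k\<in>J. A $ k $ k)"
  define R where "R = (\<Sum>k\<in>UNIV. (r $ k)\<^sup>2)"
  have Ainv: "A ** matrix_inv A = mat 1"
    using inv_props(1)[OF pd_invertible[OF pd]] .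
  have Ad: "A *v d = r"
    unfolding d_def r_def
    by (simp add: matrix_vector_mult_diff_distrib matrix_vector_mul_assoc Ainv)
  have dn_eq: "dn = d - E *v y" by (simp add: dn_def d_def)
  have Ecomp: "(E *v v) $ (idx j) = v $ j" for v j
    using sel_comp[OF inj, of v "idx j"] inj unfolding E_def by (simp add: inv_f_f)
  have Einj: "E *v v = 0 \<Longrightarrow> v = 0" for v
    using Ecomp[of v] by (simp add: vec_eq_iff)
  have Mform: "z \<bullet> (M *v w) = (E *v z) \<bullet> (A *v (E *v w))" for z w
    unfolding M_def by (simp add: matrix_vector_mul_assoc[symmetric] transp_dot)
  have Minv: "invertible M"
  proof -
    have "\<forall>v. M *v v = 0 \<longrightarrow> v = 0"
    proof (intro allI impI)
      fix v assume "M *v v = 0"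
      then have "(E *v v) \<bullet> (A *v (E *v v)) = 0" using Mform[of v v] by simp
      then have "E *v v = 0" using pd by (metis less_irrefl)
      then show "v = 0" using Einj by blast
    qed
    then show ?thesis
      using invertible_left_inverse matrix_left_invertible_ker by blast
  qed
  have My: "M *v y = s"
    unfolding y_def by (simp add: matrix_vector_mul_assoc inv_props(1)[OF Minv])
  have Ed: "(E *v z) \<bullet> (A *v d) = z \<bullet> s" for z
    unfolding Ad s_def by (simp add: transp_dot)
  have EAE: "(E *v z) \<bullet> (A *v (E *v y)) = z \<bullet> s" for z
    using Mform[of z y] My by simp
  have dAEy: "d \<bullet> (A *v (E *v y)) = y \<bullet> s"
    using sym_dot[OF sym, of d "E *v y"] Ed[of y] by simp
  have key: "d \<bullet> (A *v d) - dn \<bullet> (A *v dn) = y \<bullet> s"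
    unfolding dn_eq using Ed[of y] EAE[of y] dAEy
    by (simp add: matrix_vector_mult_diff_distrib inner_diff_left inner_diff_right)
  have var: "2 * (z \<bullet> s) - z \<bullet> (M *v z) \<le> y \<bullet> s" for z
  proof -
    have "0 \<le> (E *v z - E *v y) \<bullet> (A *v (E *v z - E *v y))" using psd by blast
    also have "\<dots> = z \<bullet> (M *v z) - 2 * (z \<bullet> s) + y \<bullet> s"
      using EAE[of z] EAE[of y] sym_dot[OF sym, of "E *v y" "E *v z"] Mform[of z z]
      by (simp add: matrix_vector_mult_diff_distrib inner_diff_left inner_diff_right)
    finally show ?thesis by simp
  qed
  have scomp: "s $ j = r $ (idx j)" for j unfolding s_def E_def by (rule selT_comp)
  have Escomp: "(E *v s) $ k = (if k \<in> J then r $ k else 0)" for k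
    using sel_comp[OF inj, of s k] unfolding E_def[symmetric] J_def
    by (simp add: scomp f_inv_into_f)
  have ss: "s \<bullet> s = S"
  proof -
    have "s \<bullet> s = (\<Sum>j\<in>UNIV. (r $ (idx j))\<^sup>2)"
      by (simp add: inner_vec_def scomp power2_eq_square)
    also have "\<dots> = S" unfolding S_def J_def
      using sum.reindex[OF inj, of "\<lambda>k. (r $ k)\<^sup>2"] by simp
    finally show ?thesis .
  qed
  have Qb: "(E *v s) \<bullet> (A *v (E *v s)) \<le> S * T"
  proof -
    have "(E *v s) \<bullet> (A *v (E *v s)) \<le> (\<Sum>k\<in>UNIV. ((E *v s) $ k)\<^sup>2) * (\<Sum>k\<in>J. A$k$k)"
      by (rule quad_bound[OF sym psd]) (simp add: Escomp)
    also have "(\<Sum>k\<in>UNIV. ((E *v s) $ k)\<^sup>2) = S"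
      unfolding Escomp S_def by (simp add: if_distrib[of "\<lambda>t. t\<^sup>2"] sum.If_cases)
    finally show ?thesis unfolding T_def .
  qed
  have Tpos: "T > 0"
  proof -
    have "A $ k $ k > 0" for k
      using pd[rule_format, of "axis k 1"] axis_form[of k A k] by simp
    moreover have "J \<noteq> {}" unfolding J_def by simp
    ultimately show ?thesis unfolding T_def by (simp add: sum_pos)
  qed
  have S0: "S \<ge> 0" unfolding S_def by (simp add: sum_nonneg)
  have ys: "y \<bullet> s \<ge> S / T"
  proof -
    define z where "z = (1/T) *\<^sub>R s"
    have "2 * (z \<bullet> s) - z \<bullet> (M *v z) \<le> y \<bullet> s" by (rule var)
    moreover have "z \<bullet> s = S / T" unfolding z_def using ss by simp
    moreover have "z \<bullet> (M *v z) = ((E *v s) \<bullet> (A *v (E *v s))) / T\<^sup>2"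
      unfolding z_def Mform by (simp add: matrix_vector_mult_scaleR power2_eq_square)
    moreover have "((E *v s) \<bullet> (A *v (E *v s))) / T\<^sup>2 \<le> S / T"
      using Qb Tpos by (simp add: divide_simps power2_eq_square)
    ultimately show ?thesis by simp
  qed
  have nrm: "(A_norm A v)\<^sup>2 = v \<bullet> (A *v v)" for v
    using psd by (simp add: A_norm_def)
  have C1: "(A_norm A d)\<^sup>2 - (A_norm A dn)\<^sup>2 \<ge> S / T"
    using key ys by (simp add: nrm)
  have dnz: "d \<noteq> 0" using Ad r_nz unfolding r_def by auto
  define N where "N = d \<bullet> (A *v d)"
  have Npos: "N > 0" using pd dnz unfolding N_def by blast
  have RR: "R = r \<bullet> r" unfolding R_def by (simp add: inner_vec_def power2_eq_square)
  have Rpos: "R > 0" unfolding RR using r_nz r_def by simp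
  obtain \<mu> v where ev: "v \<noteq> 0" "A *v v = \<mu> *\<^sub>R v" and mup: "\<mu> > 0"
    and lb: "\<forall>w. w \<bullet> (A *v w) \<ge> \<mu> * (w \<bullet> w)"
    using rayleigh_min[OF spd] by blast
  have lam: "lambda_min A \<le> \<mu>"
    using lambda_min_le[OF spd] ev unfolding is_eigenvalue_def by blast
  have RN: "R \<ge> \<mu> * N"
  proof -
    define g where "g = A *v d - \<mu> *\<^sub>R d"
    have "R - \<mu> * N = g \<bullet> g + \<mu> * (N - \<mu> * (d \<bullet> d))"
      unfolding g_def RR N_def Ad[symmetric]
      by (simp add: inner_diff_left inner_diff_right inner_commute[of d "A *v d"] algebra_simps)
    moreover have "N - \<mu> * (d \<bullet> d) \<ge> 0" using lb unfolding N_def by auto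
    ultimately show ?thesis using mup by (smt (verit) inner_ge_zero mult_nonneg_nonneg)
  qed
  have lN: "lambda_min A * N \<le> R" using lam Npos RN
    by (smt (verit) mult_right_mono)
  have dnN: "dn \<bullet> (A *v dn) \<le> N - S / T" using key ys unfolding N_def by simp
  define c where "c = 1 - lambda_min A / T * (S / R)"
  have "lambda_min A / T * (S / R) * N = (S / T) * (lambda_min A * N / R)"
    by (simp add: field_simps)
  also have "\<dots> \<le> (S / T) * 1"
    using lN Rpos S0 Tpos by (intro mult_left_mono) (simp_all add: divide_le_eq_1)
  finally have "c * N \<ge> N - S / T" unfolding c_def by (simp add: algebra_simps)
  then have "dn \<bullet> (A *v dn) \<le> c * N" using dnN by linarith
  then have "A_norm A dn \<le> sqrt (c * N)" unfolding A_norm_def by simp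
  then have C2: "A_norm A dn \<le> sqrt c * A_norm A d"
    unfolding A_norm_def N_def by (simp add: real_sqrt_mult)
  have F: "S / T \<le> (A_norm A d)\<^sup>2 - (A_norm A dn)\<^sup>2 \<and> A_norm A dn \<le> sqrt c * A_norm A d"
    using C1 C2 by blast
  show ?thesis
    using F unfolding Let_def c_def S_def T_def R_def dn_def y_def d_def M_def s_def J_def E_def r_def
    by blast
qed
end
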